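(* Let $k\ge 3$ and let $\varepsilon\in(0,1)$ with $1/\varepsilon>k$. Let $m\in\mathbb{N}$ satisfy $1/m<\varepsilon\le 1/(m-1)$ and put $N=m^2$. Let $E\subseteq[0,1]$ be a set that $\varepsilon$-avoids $k$APs. Then for every $j\ge 0$ and every $N$-adic interval $I=[iN^{-j},(i+1)N^{-j})$, the number of $N$-adic subintervals of $I$ of length $N^{-j-1}$ that intersect $E$ is strictly less than $m\,(r_k(m)+1)$.
   Context: A $k$-term arithmetic progression ($k$AP) is a set $P=\{x, x+\lambda, \dots, x+(k-1)\lambda\}\subset\mathbb{R}$ with $\lambda>0$, called the gap length of $P$. For $M\in\mathbb{N}$, $r_k(M)$ denotes the maximal cardinality of a subset of $\{1,\dots,M\}$ containing no $k$AP. A set $E\subset\mathbb{R}$ $\varepsilon$-avoids $k$APs if for every $k$AP $P$ with gap length $\lambda$ one has $\sup_{p\in P}\inf_{x\in E}|x-p|\ge\varepsilon\lambda$. *)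

theory Defs
  imports "HOL-Analysis.Analysis"
begin

definition has_kAP_nat :: "nat \<Rightarrow> nat set \<Rightarrow> bool" where
  "has_kAP_nat k A \<longleftrightarrow> (\<exists>a d. d > 0 \<and> (\<forall>t<k. a + t * d \<in> A))"

definition r_AP :: "nat \<Rightarrow> nat \<Rightarrow> nat" where
  "r_AP k M = Max {card A | A. A \<subseteq> {1..M} \<and> \<not> has_kAP_nat k A}"

definition kAP :: "nat \<Rightarrow> real \<Rightarrow> real \<Rightarrow> real set" where
  "kAP k x d = {x + real t * d | t. t < k}"

definition eps_avoids_kAPs :: "real \<Rightarrow> nat \<Rightarrow> real set \<Rightarrow> bool" where
  "eps_avoids_kAPs \<epsilon> k E \<longleftrightarrow>
     (\<forall>x d. d > 0 \<longrightarrow> Sup ((\<lambda>p. infdist p E) ` kAP k x d) \<ge> \<epsilon> * d)"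

definition nadic_interval :: "nat \<Rightarrow> nat \<Rightarrow> int \<Rightarrow> real set" where
  "nadic_interval N j i = {real_of_int i / real N ^ j ..< real_of_int (i + 1) / real N ^ j}"

end

theory Submission
  imports Defs
begin

lemma noAP:
  fixes bb \<delta> \<epsilon> :: real and m k :: nat and T :: "nat set"
  assumes av: "eps_avoids_kAPs \<epsilon> k E" and dp: "\<delta> > 0" and em: "\<epsilon> * real m > 1" and kp: "k > 0"
    and hT: "\<forall>a\<in>T. \<exists>y\<in>E. bb + real a * real m * \<delta> \<le> y \<and> y < bb + real a * real m * \<delta> + \<delta>"
  shows "\<not> has_kAP_nat k T"
proof
  assume "has_kAP_nat k T"
  then obtain a d where d: "d>0" and ap: "\<forall>t<k. a + t*d \<in> T" by (auto simp: has_kAP_nat_def)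
  define x where "x = bb + real a * real m * \<delta>"
  define l where "l = real d * real m * \<delta>"
  have mp: "m > 0" using em by (cases "m = 0") auto
  have lpos: "l > 0" using d mp dp by (simp add: l_def)
  have eq: "kAP k x l = (\<lambda>t. x + real t * l) ` {..<k}" by (auto simp: kAP_def)
  have fin: "finite (kAP k x l)" "kAP k x l \<noteq> {}" using kp by (auto simp: eq)
  have lt: "\<forall>p\<in>kAP k x l. infdist p E < \<delta>"
  proof
    fix p assume "p \<in> kAP k x l"
    then obtain t where t: "t<k" and p: "p = x + real t * l" by (auto simp: kAP_def)
    from ap t hT obtain y where y: "y \<in> E" "bb + real (a+t*d) * real m * \<delta> \<le> y"
       "y < bb + real (a+t*d) * real m * \<delta> + \<delta>" by blast
    have "bb + real (a+t*d) * real m * \<delta> = p" by (simp add: p x_def l_def algebra_simps)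
    with y have "dist p y < \<delta>" by (simp add: dist_real_def)
    moreover have "infdist p E \<le> dist p y" using y(1) by (rule infdist_le)
    ultimately show "infdist p E < \<delta>" by linarith
  qed
  have "Sup ((\<lambda>p. infdist p E) ` kAP k x l) = Max ((\<lambda>p. infdist p E) ` kAP k x l)"
    using fin by (intro cSup_eq_Max) auto
  also have "\<dots> < \<delta>" using fin lt by (subst Max_less_iff) auto
  finally have s: "Sup ((\<lambda>p. infdist p E) ` kAP k x l) < \<delta>" .
  have "real d \<ge> 1" using d by simp
  hence "\<epsilon> * real m * real d \<ge> \<epsilon> * real m" using em by (simp add: mult_le_cancel_left1)
  hence "\<epsilon> * real m * real d > 1" using em by linarith
  hence "\<epsilon> * l > \<delta>" using dp by (simp add: l_def) (metis mult.assoc mult.commute mult_less_cancel_right1 mult.left_commute)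
  moreover have "Sup ((\<lambda>p. infdist p E) ` kAP k x l) \<ge> \<epsilon> * l"
    using av lpos unfolding eps_avoids_kAPs_def by blast
  ultimately show False using s by linarith
qed

lemma card_le_r:
  assumes "T \<subseteq> {1..m}" "\<not> has_kAP_nat k T"
  shows "card T \<le> r_AP k m"
proof -
  have "{card A | A. A \<subseteq> {1..m} \<and> \<not> has_kAP_nat k A} = card ` {A. A \<subseteq> {1..m} \<and> \<not> has_kAP_nat k A}"
    by auto
  moreover have "finite {A. A \<subseteq> {1..m} \<and> \<not> has_kAP_nat k A}"
    by (rule finite_subset[of _ "Pow {1..m}"]) auto
  ultimately show ?thesis unfolding r_AP_def using assms by (auto intro!: Max_ge)
qed

theorem mainTheorem10:
  fixes k m :: nat and \<epsilon> :: real and E :: "real set"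
  assumes "k \<ge> 3"
    and "0 < \<epsilon>" and "\<epsilon> < 1" and "1 / \<epsilon> > real k"
    and "1 / real m < \<epsilon>" and "\<epsilon> \<le> 1 / (real m - 1)"
    and "E \<subseteq> {0..1}"
    and "eps_avoids_kAPs \<epsilon> k E"
  shows "\<forall>(j::nat) (i::int).
           card {J. (\<exists>i'. J = nadic_interval (m^2) (j + 1) i')
                    \<and> J \<subseteq> nadic_interval (m^2) j i \<and> J \<inter> E \<noteq> {}}
           < m * (r_AP k m + 1)"
proof (intro allI)
  fix j :: nat and i :: int
  have m2: "m \<ge> 2"
  proof (rule ccontr)
    assume "\<not> m \<ge> 2"
    hence "m = 0 \<or> m = 1" by auto
    thus False using assms(2,6) by auto
  qed
  have em: "\<epsilon> * real m > 1" using assms(5) m2 by (simp add: field_simps)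
  define N where "N = m^2"
  define \<delta> :: real where "\<delta> = 1 / real N ^ (j+1)"
  have Np: "N > 0" using m2 by (simp add: N_def)
  have dp: "\<delta> > 0" using Np by (simp add: \<delta>_def)
  have nad: "nadic_interval N (j+1) i' = {real_of_int i' * \<delta> ..< real_of_int i' * \<delta> + \<delta>}" for i'
    by (simp add: nadic_interval_def \<delta>_def add_divide_distrib)
  define S where "S = {i'::int. i*N \<le> i' \<and> i' < (i+1)*N \<and> nadic_interval N (j+1) i' \<inter> E \<noteq> {}}"
  have finS: "finite S" by (rule finite_subset[of _ "{i*N..<(i+1)*N}"]) (auto simp: S_def)
  have sub: "{J. (\<exists>i'. J = nadic_interval (m^2) (j + 1) i')
                    \<and> J \<subseteq> nadic_interval (m^2) j i \<and> J \<inter> E \<noteq> {}}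
          \<subseteq> (\<lambda>i'. nadic_interval N (j+1) i') ` S"
  proof
    fix J assume "J \<in> {J. (\<exists>i'. J = nadic_interval (m^2) (j + 1) i')
                    \<and> J \<subseteq> nadic_interval (m^2) j i \<and> J \<inter> E \<noteq> {}}"
    then obtain i' where J: "J = nadic_interval N (j+1) i'" and Js: "J \<subseteq> nadic_interval N j i"
       and JE: "J \<inter> E \<noteq> {}" by (auto simp: N_def)
    have "real_of_int i' * \<delta> \<in> J" using dp unfolding J nad by simp
    with Js have "real_of_int i' * \<delta> \<in> nadic_interval N j i" by blast
    hence h: "real_of_int i / real N ^ j \<le> real_of_int i' / real N ^ (j+1)"
      "real_of_int i' / real N ^ (j+1) < real_of_int (i+1) / real N ^ j"
      by (auto simp: nadic_interval_def \<delta>_def)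
    have pNj: "real N ^ j > 0" using Np by simp
    from h(1) have "real_of_int i * real N \<le> real_of_int i'" using pNj Np
      by (simp add: field_simps)
    hence a1: "i*N \<le> i'" by (metis of_int_le_iff of_int_mult of_int_of_nat_eq)
    from h(2) have "real_of_int i' < real_of_int (i+1) * real N" using pNj Np
      by (simp add: field_simps)
    hence a2: "i' < (i+1)*N" by (metis of_int_less_iff of_int_mult of_int_of_nat_eq)
    show "J \<in> (\<lambda>i'. nadic_interval N (j+1) i') ` S" using a1 a2 JE J by (auto simp: S_def)
  qed
  define Sc where "Sc c = {i'\<in>S. (i' - i*N) mod int m = int c}" for c :: nat
  have SU: "S = (\<Union>c\<in>{..<m}. Sc c)"
  proof safe
    fix i' assume "i' \<in> S"
    moreover have "(i' - i*N) mod int m \<ge> 0" "(i' - i*N) mod int m < int m" using m2 by auto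
    ultimately show "i' \<in> (\<Union>c\<in>{..<m}. Sc c)" unfolding Sc_def
      by (intro UN_I[of "nat ((i' - i*N) mod int m)"]) auto
  qed (auto simp: Sc_def)
  have cSc: "card (Sc c) \<le> r_AP k m" if c: "c < m" for c
  proof -
    define g where "g i' = nat ((i' - i*N) div int m) + 1" for i'
    have rep: "i' = i*N + int c + int m * (int (g i') - 1)" if "i' \<in> Sc c" for i'
    proof -
      have "i' - i*N \<ge> 0" using that by (auto simp: Sc_def S_def)
      hence "(i' - i*N) div int m \<ge> 0" using m2 by (intro div_int_pos_iff[THEN iffD2]) auto
      hence "int (g i') - 1 = (i' - i*N) div int m" by (simp add: g_def)
      moreover have "(i' - i*N) = int m * ((i' - i*N) div int m) + (i' - i*N) mod int m"
        by simp
      moreover have "(i' - i*N) mod int m = int c" using that by (simp add: Sc_def)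
      ultimately show ?thesis by (smt (verit))
    qed
    have inj: "inj_on g (Sc c)"
    proof
      fix a b assume "a \<in> Sc c" "b \<in> Sc c" "g a = g b"
      thus "a = b" using rep[of a] rep[of b] by simp
    qed
    have rng: "g ` Sc c \<subseteq> {1..m}"
    proof
      fix y assume "y \<in> g ` Sc c"
      then obtain i' where i': "i' \<in> Sc c" "y = g i'" by auto
      have "i' - i*N < int m * int m" using i' by (auto simp: Sc_def S_def N_def power2_eq_square algebra_simps)
      moreover have "(i' - i*N) = int m * ((i' - i*N) div int m) + (i' - i*N) mod int m" by simp
      moreover have "(i' - i*N) mod int m \<ge> 0" using m2 by simp
      ultimately have "int m * ((i' - i*N) div int m) < int m * int m" by linarith
      hence "(i' - i*N) div int m < int m" using m2 by (simp add: mult_less_cancel_left)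
      thus "y \<in> {1..m}" using i' using m2 by (auto simp: g_def Suc_le_eq)
    qed
    have noap: "\<not> has_kAP_nat k (g ` Sc c)"
    proof (rule noAP[where bb = "(real_of_int (i*N) + real c - real m) * \<delta>", OF assms(8) dp em])
      show "k > 0" using assms(1) by simp
      show "\<forall>a\<in>g ` Sc c. \<exists>y\<in>E. (real_of_int (i*N) + real c - real m) * \<delta> + real a * real m * \<delta> \<le> y \<and>
               y < (real_of_int (i*N) + real c - real m) * \<delta> + real a * real m * \<delta> + \<delta>"
      proof
        fix a assume "a \<in> g ` Sc c"
        then obtain i' where i': "i' \<in> Sc c" "a = g i'" by auto
        have ga: "g i' \<ge> 1" by (simp add: g_def)
        have "real_of_int i' = real_of_int (i*N + int c + int m * (int (g i') - 1))"
          using rep[OF i'(1)] by simp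
        hence h: "real_of_int i' = real_of_int i * real N + real c + real m * real (g i') - real m"
          by (simp add: algebra_simps)
        have e: "(real_of_int (i*N) + real c - real m) * \<delta> + real a * real m * \<delta> = real_of_int i' * \<delta>"
          unfolding i'(2) h by (simp add: algebra_simps)
        from i' have "nadic_interval N (j+1) i' \<inter> E \<noteq> {}" by (auto simp: Sc_def S_def)
        then obtain y where "y \<in> E" "y \<in> nadic_interval N (j+1) i'" by auto
        thus "\<exists>y\<in>E. (real_of_int (i*N) + real c - real m) * \<delta> + real a * real m * \<delta> \<le> y \<and>
               y < (real_of_int (i*N) + real c - real m) * \<delta> + real a * real m * \<delta> + \<delta>"
          unfolding e nad by auto
      qed
    qed
    have "card (Sc c) = card (g ` Sc c)" using inj by (simp add: card_image)
    also have "\<dots> \<le> r_AP k m" using rng noap by (rule card_le_r)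
    finally show ?thesis .
  qed
  have "card {J. (\<exists>i'. J = nadic_interval (m^2) (j + 1) i')
                    \<and> J \<subseteq> nadic_interval (m^2) j i \<and> J \<inter> E \<noteq> {}}
        \<le> card ((\<lambda>i'. nadic_interval N (j+1) i') ` S)"
    using sub finS by (intro card_mono) auto
  also have "\<dots> \<le> card S" using finS by (rule card_image_le)
  also have "\<dots> \<le> (\<Sum>c<m. card (Sc c))" unfolding SU by (rule card_UN_le) simp
  also have "\<dots> \<le> (\<Sum>c<m. r_AP k m)" using cSc by (intro sum_mono) auto
  also have "\<dots> = m * r_AP k m" by simp
  also have "\<dots> < m * (r_AP k m + 1)" using m2 by simp
  finally show "card {J. (\<exists>i'. J = nadic_interval (m^2) (j + 1) i')
                    \<and> J \<subseteq> nadic_interval (m^2) j i \<and> J \<inter> E \<noteq> {}}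
           < m * (r_AP k m + 1)" .
qed

end
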